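(* Let $I$ be an irreducible numerical semigroup. Then the graph $\mathrm{G}([\theta(I),I])$ is a rooted tree with root $I$, and for every vertex $P$ of this tree, the set of children of $P$ is $\{P\setminus\{x\}\mid x\in\mathrm{msg}(P),\ \frac{\mathrm{F}(I)}{2}<x<\mathrm{F}(I),\ \mathrm{h}(P)<x\}$.
   Context: A numerical semigroup is a subset $S\subseteq\mathbb{N}$ closed under addition with $0\in S$ and $\mathbb{N}\setminus S$ finite; $\mathrm{F}(S)=\max(\mathbb{Z}\setminus S)$; $\mathrm{msg}(P)$ is the minimal system of generators of $P$; $\langle X\rangle$ is the submonoid of $(\mathbb{N},+)$ generated by $X$. Irreducible: not the intersection of two numerical semigroups properly containing it. $\Delta(S)=\{s\in S\mid s<\frac{\mathrm{F}(S)}{2}\}$ and $\theta(S)=\langle\Delta(S)\rangle\cup\{\mathrm{F}(S)+1,\mathrm{F}(S)+2,\ldots\}$. For numerical semigroups $A\subseteq B$, $[A,B]$ is the set of numerical semigroups $X$ with $A\subseteq X\subseteq B$; $\mathrm{F}_B(X)=\max(B\setminus X)$ if $X\subsetneq B$ and $\mathrm{F}_B(B)=-1$. $\mathrm{G}([A,B])$ is the directed graph with vertex set $[A,B]$ and an edge $(X,Y)$ whenever $X\cup\{\mathrm{F}_B(X)\}=Y$; a rooted tree with root $r$ is a graph in which every other vertex has a unique path to $r$, and $X$ is a child of $Y$ if $(X,Y)$ is an edge. For $P\in[\theta(I),I]$ with $P\ne I$, $\mathrm{h}(P)=\max\{x\in\mathbb{N}\setminus P\mid \mathrm{F}(P)-x\in\mathbb{N}\setminus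 P,\ x\ne\mathrm{F}(P)/2\}$ (which equals $\mathrm{F}_I(P)$), and $\mathrm{h}(I)=-1$. *)

theory Defs
  imports Main
begin

definition numerical_semigroup :: "nat set \<Rightarrow> bool" where
  "numerical_semigroup S \<longleftrightarrow> 0 \<in> S \<and> (\<forall>x\<in>S. \<forall>y\<in>S. x + y \<in> S) \<and> finite (UNIV - S)"

definition frob :: "nat set \<Rightarrow> int" where
  "frob S = (if S = UNIV then -1 else int (Max (UNIV - S)))"

inductive_set gen :: "nat set \<Rightarrow> nat set" for X :: "nat set" where
  gen_zero: "0 \<in> gen X"
| gen_base: "x \<in> X \<Longrightarrow> x \<in> gen X"
| gen_add: "a \<in> gen X \<Longrightarrow> b \<in> gen X \<Longrightarrow> a + b \<in> gen X"

definition msg :: "nat set \<Rightarrow> nat set" where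
  "msg P = {x \<in> P. x \<noteq> 0 \<and> \<not> (\<exists>a\<in>P. \<exists>b\<in>P. a \<noteq> 0 \<and> b \<noteq> 0 \<and> a + b = x)}"

definition irreducible_ns :: "nat set \<Rightarrow> bool" where
  "irreducible_ns S \<longleftrightarrow> numerical_semigroup S \<and>
     \<not> (\<exists>A B. numerical_semigroup A \<and> numerical_semigroup B \<and> S \<subset> A \<and> S \<subset> B \<and> S = A \<inter> B)"

definition Delta :: "nat set \<Rightarrow> nat set" where
  "Delta S = {s \<in> S. 2 * int s < frob S}"

definition theta :: "nat set \<Rightarrow> nat set" where
  "theta S = gen (Delta S) \<union> {n. int n > frob S}"

definition ns_interval :: "nat set \<Rightarrow> nat set \<Rightarrow> nat set set" where
  "ns_interval A B = {X. numerical_semigroup X \<and> A \<subseteq> X \<and> X \<subseteq> B}"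

definition FB :: "nat set \<Rightarrow> nat set \<Rightarrow> int" where
  "FB B X = (if X = B then -1 else int (Max (B - X)))"

text \<open>Edge (X,Y) of G([A,B]): X \<union> {F_B(X)} = Y (impossible when X = B, since F_B(B) = -1).\<close>
definition ns_edge :: "nat set \<Rightarrow> nat set \<Rightarrow> nat set \<Rightarrow> nat set \<Rightarrow> bool" where
  "ns_edge A B X Y \<longleftrightarrow> X \<in> ns_interval A B \<and> Y \<in> ns_interval A B \<and>
     X \<noteq> B \<and> insert (nat (FB B X)) X = Y"

definition is_path :: "'a set \<Rightarrow> ('a \<Rightarrow> 'a \<Rightarrow> bool) \<Rightarrow> 'a list \<Rightarrow> bool" where
  "is_path V E p \<longleftrightarrow> p \<noteq> [] \<and> distinct p \<and> set p \<subseteq> V \<and>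
     (\<forall>i. Suc i < length p \<longrightarrow> E (p ! i) (p ! Suc i))"

definition rooted_tree :: "'a set \<Rightarrow> ('a \<Rightarrow> 'a \<Rightarrow> bool) \<Rightarrow> 'a \<Rightarrow> bool" where
  "rooted_tree V E r \<longleftrightarrow> r \<in> V \<and>
     (\<forall>v\<in>V. v \<noteq> r \<longrightarrow> (\<exists>!p. is_path V E p \<and> hd p = v \<and> last p = r))"

definition hfun :: "nat set \<Rightarrow> nat set \<Rightarrow> int" where
  "hfun I P = (if P = I then -1 else
     int (Max {x. x \<notin> P \<and> int x \<le> frob P \<and> nat (frob P - int x) \<notin> P \<and> 2 * int x \<noteq> frob P}))"

end

theory Submission
  imports Defs
begin

lemma ns_zero: "numerical_semigroup S \<Longrightarrow> 0 \<in> S"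
  by (simp add: numerical_semigroup_def)
lemma ns_add: "numerical_semigroup S \<Longrightarrow> a \<in> S \<Longrightarrow> b \<in> S \<Longrightarrow> a + b \<in> S"
  by (simp add: numerical_semigroup_def)
lemma ns_fin: "numerical_semigroup S \<Longrightarrow> finite (UNIV - S)"
  by (simp add: numerical_semigroup_def)

lemma all_nat_split: "(\<forall>i::nat. P i) = (P 0 \<and> (\<forall>i. P (Suc i)))" by (metis not0_implies_Suc)

lemma is_path_single: "is_path V E [a] \<longleftrightarrow> a \<in> V"
  by (simp add: is_path_def)

lemma is_path_cons2: "is_path V E (a # b # p) \<longleftrightarrow>
   a \<in> V \<and> E a b \<and> a \<notin> set (b # p) \<and> is_path V E (b # p)"
proof -
  have "(\<forall>i. Suc i < length (a # b # p) \<longrightarrow> E ((a # b # p) ! i) ((a # b # p) ! Suc i))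
     \<longleftrightarrow> E a b \<and> (\<forall>i. Suc i < length (b # p) \<longrightarrow> E ((b # p) ! i) ((b # p) ! Suc i))"
    by (subst all_nat_split) simp
  then show ?thesis unfolding is_path_def by auto
qed

lemma ns_insert_max:
  assumes X: "numerical_semigroup X" and B: "numerical_semigroup B" and sub: "X \<subseteq> B" and ne: "X \<noteq> B"
  shows "numerical_semigroup (insert (Max (B - X)) X)" and "Max (B - X) \<in> B - X"
proof -
  let ?m = "Max (B - X)"
  have fin: "finite (B - X)" using ns_fin[OF X] by (rule finite_subset[rotated]) auto
  have nem: "B - X \<noteq> {}" using sub ne by auto
  show mB: "?m \<in> B - X" using Max_in[OF fin nem] .
  have mx: "\<And>z. z \<in> B - X \<Longrightarrow> z \<le> ?m" using Max_ge[OF fin] by auto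
  have m0: "?m \<noteq> 0" using mB ns_zero[OF X] by (metis DiffD2)
  have key: "\<And>b. b \<in> B \<Longrightarrow> b \<noteq> 0 \<Longrightarrow> ?m + b \<in> X"
  proof -
    fix b assume "b \<in> B" "b \<noteq> 0"
    then have "?m + b \<in> B" using ns_add[OF B] mB by auto
    moreover have "\<not> ?m + b \<le> ?m" using \<open>b \<noteq> 0\<close> by simp
    ultimately show "?m + b \<in> X" using mx by blast
  qed
  have cl: "\<forall>a\<in>insert ?m X. \<forall>b\<in>insert ?m X. a + b \<in> insert ?m X"
  proof (intro ballI)
    fix a b assume a: "a \<in> insert ?m X" and b: "b \<in> insert ?m X"
    show "a + b \<in> insert ?m X"
    proof (cases "a \<in> X \<and> b \<in> X")
      case True then show ?thesis using ns_add[OF X] by auto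
    next
      case False
      then have "a = ?m \<or> b = ?m" using a b by auto
      then show ?thesis
      proof
        assume "a = ?m"
        show ?thesis
        proof (cases "b = 0")
          case True then show ?thesis using \<open>a = ?m\<close> by simp
        next
          case False
          have "b \<in> B" using b mB sub by auto
          then show ?thesis using key[of b] False \<open>a = ?m\<close> by auto
        qed
      next
        assume "b = ?m"
        show ?thesis
        proof (cases "a = 0")
          case True then show ?thesis using \<open>b = ?m\<close> by simp
        next
          case False
          have "a \<in> B" using a mB sub by auto
          then show ?thesis using key[of a] False \<open>b = ?m\<close> by (auto simp: add.commute)
        qed
      qed
    qed
  qed
  have "finite (UNIV - insert ?m X)" using ns_fin[OF X] by (rule finite_subset[rotated]) auto
  then show "numerical_semigroup (insert (Max (B - X)) X)"
    using cl ns_zero[OF X] unfolding numerical_semigroup_def by auto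
qed

lemma edge_det: "ns_edge A B X Y \<Longrightarrow> ns_edge A B X Z \<Longrightarrow> Y = Z"
  by (simp add: ns_edge_def)
lemma edge_notB: "ns_edge A B X Y \<Longrightarrow> X \<noteq> B"
  by (simp add: ns_edge_def)

lemma path_unique:
  assumes "is_path V (ns_edge A B) p" "is_path V (ns_edge A B) q" "hd p = hd q"
    "last p = B" "last q = B"
  shows "p = q"
  using assms
proof (induction p arbitrary: q)
  case Nil then show ?case by (simp add: is_path_def)
next
  case (Cons a p')
  obtain q' where q: "q = a # q'" using Cons.prems by (cases q) (auto simp: is_path_def)
  show ?case
  proof (cases p')
    case Nil
    then have aB: "a = B" using Cons.prems by simp
    show ?thesis
    proof (cases q')
      case Nil then show ?thesis using q \<open>p' = []\<close> by simp
    next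
      case (Cons c q'')
      then have "ns_edge A B a c" using Cons.prems(2) q is_path_cons2 by metis
      then show ?thesis using edge_notB aB by blast
    qed
  next
    case (Cons b p'')
    have e1: "ns_edge A B a b" and pp: "is_path V (ns_edge A B) p'"
      using Cons.prems(1) Cons is_path_cons2 by metis+
    have aB: "a \<noteq> B" using edge_notB[OF e1] .
    obtain c q'' where q': "q' = c # q''"
      using Cons.prems(5) q aB by (cases q') auto
    have e2: "ns_edge A B a c" and qq: "is_path V (ns_edge A B) q'"
      using Cons.prems(2) q q' is_path_cons2 by metis+
    have "b = c" using edge_det[OF e1 e2] .
    have "p' = q'"
      by (rule Cons.IH[OF pp qq]) (use Cons.prems q q' \<open>p' = b # p''\<close> \<open>b = c\<close> in auto)
    then show ?thesis using q by simp
  qed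
qed

lemma path_exists:
  assumes B: "numerical_semigroup B" and X: "X \<in> ns_interval A B"
  shows "\<exists>p. is_path (ns_interval A B) (ns_edge A B) p \<and> hd p = X \<and> last p = B \<and> (\<forall>Y\<in>set p. X \<subseteq> Y)"
  using X
proof (induction "card (B - X)" arbitrary: X rule: less_induct)
  case less
  show ?case
  proof (cases "X = B")
    case True
    then show ?thesis using less.prems by (intro exI[of _ "[B]"]) (auto simp: is_path_def)
  next
    case False
    let ?m = "Max (B - X)"
    let ?Y = "insert ?m X"
    have Xns: "numerical_semigroup X" and AX: "A \<subseteq> X" and XB: "X \<subseteq> B"
      using less.prems by (auto simp: ns_interval_def)
    note ins = ns_insert_max[OF Xns B XB False]
    have YV: "?Y \<in> ns_interval A B" using ins AX XB by (auto simp: ns_interval_def)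
    have fin: "finite (B - X)" using ns_fin[OF Xns] by (rule finite_subset[rotated]) auto
    have "B - ?Y = (B - X) - {?m}" by auto
    then have "card (B - ?Y) < card (B - X)" using ins(2) fin
      by (metis card_Diff1_less)
    from less.hyps[OF this YV] obtain p where p: "is_path (ns_interval A B) (ns_edge A B) p"
      "hd p = ?Y" "last p = B" "\<forall>Z\<in>set p. ?Y \<subseteq> Z" by blast
    have pne: "p \<noteq> []" using p(1) by (simp add: is_path_def)
    then obtain b p' where pb: "p = b # p'" by (cases p) auto
    have FB: "FB B X = int ?m" using False by (simp add: FB_def)
    have e: "ns_edge A B X b" using pb p(2) less.prems YV False FB by (simp add: ns_edge_def)
    have "X \<notin> set p" using p(4) ins(2) by auto
    then have "is_path (ns_interval A B) (ns_edge A B) (X # p)"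
      using pb e p(1) less.prems is_path_cons2 by metis
    moreover have "\<forall>Z\<in>set (X # p). X \<subseteq> Z" using p(4) by auto
    ultimately show ?thesis using p(3) pne by (intro exI[of _ "X # p"]) auto
  qed
qed

lemma tree_general:
  assumes B: "numerical_semigroup B" and AB: "A \<subseteq> B"
  shows "rooted_tree (ns_interval A B) (ns_edge A B) B"
  unfolding rooted_tree_def
proof (intro conjI ballI impI)
  show "B \<in> ns_interval A B" using B AB by (simp add: ns_interval_def)
  fix v assume v: "v \<in> ns_interval A B" "v \<noteq> B"
  from path_exists[OF B v(1)] obtain p where p: "is_path (ns_interval A B) (ns_edge A B) p"
    "hd p = v" "last p = B" by blast
  show "\<exists>!p. is_path (ns_interval A B) (ns_edge A B) p \<and> hd p = v \<and> last p = B"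
  proof (rule ex1I[of _ p])
    show "is_path (ns_interval A B) (ns_edge A B) p \<and> hd p = v \<and> last p = B" using p by simp
    fix q assume "is_path (ns_interval A B) (ns_edge A B) q \<and> hd q = v \<and> last q = B"
    then show "q = p" using p path_unique[of "ns_interval A B" A B q p] by simp
  qed
qed


lemma frob_eq:
  assumes "numerical_semigroup S" "F \<notin> S" "\<And>n. n > F \<Longrightarrow> n \<in> S"
  shows "frob S = int F"
proof -
  have "S \<noteq> UNIV" using assms by auto
  have fin: "finite (UNIV - S)" using ns_fin[OF assms(1)] .
  have "Max (UNIV - S) = F"
    by (rule Max_eqI[OF fin]) (use assms in \<open>auto simp: not_le[symmetric]\<close>)
  then show ?thesis using \<open>S \<noteq> UNIV\<close> by (simp add: frob_def)
qed

lemma frob_props: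
  assumes "numerical_semigroup S" "S \<noteq> UNIV"
  shows "frob S = int (Max (UNIV - S))" "Max (UNIV - S) \<notin> S" "\<And>n. n > Max (UNIV - S) \<Longrightarrow> n \<in> S"
proof -
  have fin: "finite (UNIV - S)" using ns_fin[OF assms(1)] .
  have ne: "UNIV - S \<noteq> {}" using assms(2) by auto
  show "frob S = int (Max (UNIV - S))" using assms(2) by (simp add: frob_def)
  show "Max (UNIV - S) \<notin> S" using Max_in[OF fin ne] by simp
  fix n assume "n > Max (UNIV - S)"
  then show "n \<in> S" using Max_ge[OF fin, of n] by auto
qed

lemma half_not_in:
  assumes "numerical_semigroup S" "F \<notin> S" "2 * y = F"
  shows "y \<notin> S"
  using assms ns_add[OF assms(1), of y y] by (metis mult_2)

lemma irr_sym:
  assumes irr: "irreducible_ns I" and F: "F \<notin> I" "\<And>n. n > F \<Longrightarrow> n \<in> I"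
    and y: "y \<notin> I" "2 * y \<noteq> F" "y \<le> F"
  shows "F - y \<in> I"
proof (rule ccontr)
  assume c: "F - y \<notin> I"
  have ns: "numerical_semigroup I" using irr by (simp add: irreducible_ns_def)
  define G where "G = {z. z \<notin> I \<and> z \<le> F \<and> F - z \<notin> I \<and> 2 * z \<noteq> F}"
  have fin: "finite G" unfolding G_def by (rule finite_subset[of _ "{..F}"]) auto
  have yG: "y \<in> G" using y c by (simp add: G_def)
  have yG': "F - y \<in> G" using y c by (auto simp: G_def)
  define h where "h = Max G"
  have hG: "h \<in> G" unfolding h_def using Max_in[OF fin] yG by auto
  have hmax: "\<And>z. z \<in> G \<Longrightarrow> z \<le> h" unfolding h_def using Max_ge[OF fin] by auto
  have "y \<le> h" "F - y \<le> h" using hmax yG yG' by auto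
  then have h2: "2 * h > F" using hG by (auto simp: G_def)
  have hI: "h \<notin> I" and hF: "h \<le> F" and hF2: "F - h \<notin> I" using hG by (auto simp: G_def)
  have "h \<noteq> F" using hF2 ns_zero[OF ns] by auto
  define A where "A = insert h I"
  define B where "B = insert F I"
  have keyA: "\<And>b. b \<in> I \<Longrightarrow> b \<noteq> 0 \<Longrightarrow> h + b \<in> I"
  proof (rule ccontr)
    fix b assume b: "b \<in> I" "b \<noteq> 0" "h + b \<notin> I"
    have le: "h + b \<le> F" using b F(2) not_le by blast
    have ne: "h + b \<noteq> F" using b hF2 by auto
    have "F - (h + b) \<notin> I"
    proof
      assume "F - (h + b) \<in> I"
      then have "F - (h + b) + b \<in> I" using ns_add[OF ns] b by auto
      moreover have "F - (h + b) + b = F - h" using le by simp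
      ultimately show False using hF2 by simp
    qed
    then have "h + b \<in> G" using b le h2 by (auto simp: G_def)
    then show False using hmax[of "h+b"] b by simp
  qed
  have nsA: "numerical_semigroup A"
  proof -
    have "\<forall>a\<in>A. \<forall>b\<in>A. a + b \<in> A"
      using keyA h2 F(2) ns_add[OF ns] unfolding A_def
      by (auto simp: add.commute)
    moreover have "finite (UNIV - A)" using ns_fin[OF ns] by (rule finite_subset[rotated]) (auto simp: A_def)
    ultimately show ?thesis using ns_zero[OF ns] by (simp add: numerical_semigroup_def A_def)
  qed
  have nsB: "numerical_semigroup B"
  proof -
    have F0: "F \<noteq> 0" using F(1) ns_zero[OF ns] by metis
    have "\<forall>a\<in>B. \<forall>b\<in>B. a + b \<in> B"
    proof (intro ballI)
      fix a b assume "a \<in> B" "b \<in> B"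
      then show "a + b \<in> B" unfolding B_def
        using F(2)[of "a+b"] ns_add[OF ns, of a b] F0 by (cases "a = 0"; cases "b = 0") auto
    qed
    moreover have "finite (UNIV - B)" using ns_fin[OF ns] by (rule finite_subset[rotated]) (auto simp: B_def)
    ultimately show ?thesis using ns_zero[OF ns] by (simp add: numerical_semigroup_def B_def)
  qed
  have "I \<subset> A" "I \<subset> B" "I = A \<inter> B" using hI F(1) \<open>h \<noteq> F\<close> by (auto simp: A_def B_def)
  then show False using irr nsA nsB unfolding irreducible_ns_def by blast
qed

lemma gen_decomp:
  "z \<in> gen D \<Longrightarrow> z = 0 \<or> z \<in> D \<or> (\<exists>a\<in>gen D. \<exists>b\<in>gen D. a \<noteq> 0 \<and> b \<noteq> 0 \<and> a + b = z)"
proof (induction rule: gen.induct)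
  case (gen_add a b)
  then show ?case
    by (cases "a = 0"; cases "b = 0") (auto intro: gen.intros)
qed auto

lemma gen_sub: "D \<subseteq> S \<Longrightarrow> numerical_semigroup S \<Longrightarrow> gen D \<subseteq> S"
proof
  fix z assume a: "D \<subseteq> S" "numerical_semigroup S" and z: "z \<in> gen D"
  from z show "z \<in> S" by (induction rule: gen.induct) (use a in \<open>auto simp: ns_zero ns_add\<close>)
qed


theorem corollary29:
  fixes I :: "nat set"
  assumes "irreducible_ns I"
  shows "rooted_tree (ns_interval (theta I) I) (ns_edge (theta I) I) I \<and>
    (\<forall>P \<in> ns_interval (theta I) I.
       {X. ns_edge (theta I) I X P} =
       {P - {x} | x. x \<in> msg P \<and> frob I < 2 * int x \<and> int x < frob I \<and> hfun I P < int x})"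
proof (cases "I = UNIV")
  case True
  have nsI: "numerical_semigroup I" using assms by (simp add: irreducible_ns_def)
  have th: "theta I = UNIV" using True by (auto simp: theta_def frob_def)
  have "rooted_tree (ns_interval (theta I) I) (ns_edge (theta I) I) I"
    using tree_general[OF nsI] th True by simp
  moreover have "\<forall>P \<in> ns_interval (theta I) I.
       {X. ns_edge (theta I) I X P} =
       {P - {x} | x. x \<in> msg P \<and> frob I < 2 * int x \<and> int x < frob I \<and> hfun I P < int x}"
    using th True by (auto simp: ns_edge_def ns_interval_def frob_def)
  ultimately show ?thesis by blast
next
  case False
  have nsI: "numerical_semigroup I" using assms by (simp add: irreducible_ns_def)
  define F where "F = Max (UNIV - I)"
  have fI: "frob I = int F" and FnI: "F \<notin> I" and gtI: "\<And>n. n > F \<Longrightarrow> n \<in> I"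
    using frob_props[OF nsI False] by (auto simp: F_def)
  have Delta_eq: "Delta I = {s \<in> I. 2 * s < F}" by (auto simp: Delta_def fI)
  have theta_eq: "theta I = gen (Delta I) \<union> {n. n > F}" by (auto simp: theta_def fI)
  have thI: "theta I \<subseteq> I"
    using gen_sub[OF _ nsI, of "Delta I"] gtI by (auto simp: theta_eq Delta_eq)
  have tree: "rooted_tree (ns_interval (theta I) I) (ns_edge (theta I) I) I"
    using tree_general[OF nsI thI] .
  have basic: "numerical_semigroup P \<and> theta I \<subseteq> P \<and> P \<subseteq> I \<and> (\<forall>n>F. n \<in> P)
      \<and> (\<forall>s\<in>I. 2 * s < F \<longrightarrow> s \<in> P) \<and> frob P = int F"
    if "P \<in> ns_interval (theta I) I" for P
  proof -
    have P: "numerical_semigroup P" "theta I \<subseteq> P" "P \<subseteq> I" using that by (auto simp: ns_interval_def)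
    have gt: "\<forall>n>F. n \<in> P" using P(2) by (auto simp: theta_eq)
    have sm: "\<forall>s\<in>I. 2 * s < F \<longrightarrow> s \<in> P" using P(2) by (auto simp: theta_eq Delta_eq intro: gen_base)
    have "frob P = int F" using frob_eq[OF P(1)] FnI P(3) gt by auto
    then show ?thesis using P gt sm by blast
  qed
  have outside: "F \<le> 2 * z \<and> z < F \<and> 2 * z \<noteq> F"
    if "P \<in> ns_interval (theta I) I" "z \<in> I" "z \<notin> P" for P z
  proof -
    note b = basic[OF that(1)]
    have "\<not> 2 * z < F" using b that by blast
    moreover have "z \<le> F" using b that by (meson not_le)
    moreover have "z \<noteq> F" using FnI that by auto
    moreover have "2 * z \<noteq> F" using half_not_in[OF nsI FnI] that by blast
    ultimately show ?thesis by simp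
  qed
  have hval: "hfun I P = int (Max (I - P))" if P: "P \<in> ns_interval (theta I) I" "P \<noteq> I" for P
  proof -
    note b = basic[OF P(1)]
    define H where "H = {x. x \<notin> P \<and> x \<le> F \<and> F - x \<notin> P \<and> 2 * x \<noteq> F}"
    have hdef: "hfun I P = int (Max H)"
      using P(2) b unfolding hfun_def H_def
      by (simp, intro arg_cong[where f=Max] Collect_cong) (auto simp: nat_diff_distrib')
    have finH: "finite H" unfolding H_def by (rule finite_subset[of _ "{..F}"]) auto
    have finIP: "finite (I - P)" using ns_fin[of P] b by (rule_tac finite_subset[of _ "UNIV - P"]) auto
    have neIP: "I - P \<noteq> {}" using P b by auto
    define m where "m = Max (I - P)"
    have mIP: "m \<in> I - P" unfolding m_def using Max_in[OF finIP neIP] .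
    have mge: "\<And>z. z \<in> I - P \<Longrightarrow> z \<le> m" unfolding m_def using Max_ge[OF finIP] by auto
    have IPH: "I - P \<subseteq> H"
    proof
      fix z assume z: "z \<in> I - P"
      have o: "F \<le> 2 * z \<and> z < F \<and> 2 * z \<noteq> F" using outside[OF P(1)] z by blast
      have "F - z \<notin> I"
      proof
        assume "F - z \<in> I"
        then have "F - z + z \<in> I" using ns_add[OF nsI] z by blast
        then show False using o FnI by simp
      qed
      then show "z \<in> H" using z o b by (auto simp: H_def)
    qed
    have Hle: "y \<le> m" if y: "y \<in> H" for y
    proof (cases "y \<in> I")
      case True
      then show ?thesis using y mge by (auto simp: H_def)
    next
      case False
      have yy: "y \<notin> P" "y \<le> F" "F - y \<notin> P" "2 * y \<noteq> F" using y by (auto simp: H_def)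
      have "F - y \<in> I" using irr_sym[OF assms FnI gtI False yy(4) yy(2)] .
      then have "F - y \<in> I - P" using yy by auto
      then have "F \<le> 2 * (F - y)" "F - y \<le> m" using outside[OF P(1)] mge by auto
      then show ?thesis using yy(2) by arith
    qed
    have "Max H = m" by (rule Max_eqI[OF finH]) (use Hle IPH mIP in auto)
    then show ?thesis using hdef m_def by simp
  qed
  have children: "{X. ns_edge (theta I) I X P} =
       {P - {x} | x. x \<in> msg P \<and> frob I < 2 * int x \<and> int x < frob I \<and> hfun I P < int x}"
    if P: "P \<in> ns_interval (theta I) I" for P
  proof (intro set_eqI iffI)
    note b = basic[OF P]
    fix X assume "X \<in> {X. ns_edge (theta I) I X P}"
    then have e: "ns_edge (theta I) I X P" by simp
    have XV: "X \<in> ns_interval (theta I) I" and XI: "X \<noteq> I" and ins: "insert (nat (FB I X)) X = P"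
      using e by (auto simp: ns_edge_def)
    note bX = basic[OF XV]
    define x where "x = Max (I - X)"
    have finIX: "finite (I - X)" using ns_fin[of X] bX by (rule_tac finite_subset[of _ "UNIV - X"]) auto
    have neIX: "I - X \<noteq> {}" using XI bX by auto
    have xIX: "x \<in> I - X" unfolding x_def using Max_in[OF finIX neIX] .
    have xge: "\<And>z. z \<in> I - X \<Longrightarrow> z \<le> x" unfolding x_def using Max_ge[OF finIX] by auto
    have Pins: "P = insert x X" using ins XI by (simp add: FB_def x_def)
    have XPx: "X = P - {x}" using Pins xIX by auto
    have x0: "x \<noteq> 0" using xIX ns_zero[of X] bX by (metis DiffD2)
    have xmsg: "x \<in> msg P"
    proof -
      have "\<not> (\<exists>a\<in>P. \<exists>c\<in>P. a \<noteq> 0 \<and> c \<noteq> 0 \<and> a + c = x)"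
      proof
        assume "\<exists>a\<in>P. \<exists>c\<in>P. a \<noteq> 0 \<and> c \<noteq> 0 \<and> a + c = x"
        then obtain a c where ac: "a \<in> P" "c \<in> P" "a \<noteq> 0" "c \<noteq> 0" "a + c = x" by blast
        then have "a \<in> X" "c \<in> X" using Pins by auto
        then have "x \<in> X" using ns_add[of X a c] bX ac by auto
        then show False using xIX by auto
      qed
      then show ?thesis using x0 Pins by (auto simp: msg_def)
    qed
    have o: "F \<le> 2 * x \<and> x < F \<and> 2 * x \<noteq> F" using outside[OF XV] xIX by blast
    have hx: "hfun I P < int x"
    proof (cases "P = I")
      case True then show ?thesis by (simp add: hfun_def)
    next
      case False
      have finIP: "finite (I - P)" by (rule finite_subset[OF _ finIX]) (use Pins in auto)
      have neIP: "I - P \<noteq> {}" using False b by auto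
      have "Max (I - P) \<in> I - P" using Max_in[OF finIP neIP] .
      then have "Max (I - P) < x" using xge Pins by fastforce
      then show ?thesis using hval[OF P False] by simp
    qed
    show "X \<in> {P - {x} | x. x \<in> msg P \<and> frob I < 2 * int x \<and> int x < frob I \<and> hfun I P < int x}"
      using XPx xmsg o hx fI by auto
  next
    note b = basic[OF P]
    fix X assume "X \<in> {P - {x} | x. x \<in> msg P \<and> frob I < 2 * int x \<and> int x < frob I \<and> hfun I P < int x}"
    then obtain x where X: "X = P - {x}" and xm: "x \<in> msg P" and x1: "F < 2 * x" and x2: "x < F"
      and hx: "hfun I P < int x" using fI by auto
    have xP: "x \<in> P" and x0: "x \<noteq> 0"
      and nd: "\<And>a c. a \<in> P \<Longrightarrow> c \<in> P \<Longrightarrow> a \<noteq> 0 \<Longrightarrow> c \<noteq> 0 \<Longrightarrow> a + c \<noteq> x"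
      using xm by (auto simp: msg_def)
    have nsX: "numerical_semigroup X"
    proof -
      have "0 \<in> X" using X x0 b ns_zero by blast
      moreover have "\<forall>a\<in>X. \<forall>c\<in>X. a + c \<in> X"
      proof (intro ballI)
        fix a c assume ac: "a \<in> X" "c \<in> X"
        then have "a + c \<in> P" using X b ns_add by blast
        moreover have "a + c \<noteq> x"
          using ac X nd[of a c] by (cases "a = 0"; cases "c = 0") auto
        ultimately show "a + c \<in> X" using X by simp
      qed
      moreover have "finite (UNIV - X)" using b ns_fin[of P]
        by (rule_tac finite_subset[of _ "insert x (UNIV - P)"]) (auto simp: X)
      ultimately show ?thesis by (simp add: numerical_semigroup_def)
    qed
    have xth: "x \<notin> theta I"
    proof
      assume "x \<in> theta I"
      then have "x \<in> gen (Delta I)" using x2 by (auto simp: theta_eq)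
      from gen_decomp[OF this] show False
      proof (elim disjE)
        assume "x \<in> Delta I" then show False using x1 by (simp add: Delta_eq)
      next
        assume "\<exists>a\<in>gen (Delta I). \<exists>c\<in>gen (Delta I). a \<noteq> 0 \<and> c \<noteq> 0 \<and> a + c = x"
        moreover have "gen (Delta I) \<subseteq> P" using b by (auto simp: theta_eq)
        ultimately show False using nd by blast
      qed (use x0 in auto)
    qed
    have XV: "X \<in> ns_interval (theta I) I" using nsX b xth X by (auto simp: ns_interval_def)
    have xI: "x \<in> I" using xP b by auto
    have XI: "X \<noteq> I" using xI X by auto
    have "Max (I - X) = x"
    proof (rule Max_eqI)
      show "finite (I - X)" using ns_fin[OF nsX] by (rule finite_subset[rotated]) auto
      show "x \<in> I - X" using xI X by auto
      fix z assume z: "z \<in> I - X"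
      show "z \<le> x"
      proof (cases "z = x")
        case False
        then have zIP: "z \<in> I - P" using z X by auto
        then have PI: "P \<noteq> I" by auto
        have finIP: "finite (I - P)" using ns_fin[of P] b by (rule_tac finite_subset[of _ "UNIV - P"]) auto
        have "z \<le> Max (I - P)" using Max_ge[OF finIP zIP] .
        then show ?thesis using hval[OF P PI] hx by simp
      qed simp
    qed
    then have "insert (nat (FB I X)) X = P" using XI X xP by (auto simp: FB_def)
    then show "X \<in> {X. ns_edge (theta I) I X P}" using XV P XI by (simp add: ns_edge_def)
  qed
  show ?thesis using tree children by blast
qed

end
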